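(* Let $n,m\ge 1$, $p_{ij}\in\mathbb{R}^3$, $N^x_i,N^y_i,N^z_i\in\mathbb{R}^3\setminus\{0\}$, $d_x,d_y>0$, $\epsilon>0$. Let $\mathbb{B}_R=\{r:\|r-r_c\|_\infty\le\delta_R\}$ with $\delta_R\ge0$, $\sqrt3\,\delta_R\le\pi$, $\Phi_c=R(r_c)$, and $\mathbb{B}_t=\{\Delta:\|\Delta-\Delta_c\|_\infty\le\delta_t\}$ with $\delta_t\ge0$. For each $i,j$ and each $a\in\{x,y,z\}$, with $N=N^a_i$ and $w=p_{ij}-\Delta_c$, let $c=(\Phi_c\bar N)^\top w$, let $\beta=\angle(\Phi_c\bar N,w)$ (if $w=0$ set $g_{\max}=g_{\min}=0$), and define $g_{\max},g_{\min}$ by: $g_{\max}=\|w\|$ if $\beta\le\sqrt3\delta_R$, otherwise $g_{\max}=\|w\|\max(\cos(\beta-\sqrt3\delta_R),\cos(\beta+\sqrt3\delta_R))$; $g_{\min}=-\|w\|$ if $\beta\ge\pi-\sqrt3\delta_R$, otherwise $g_{\min}=\|w\|\min(\cos(\beta-\sqrt3\delta_R),\cos(\beta+\sqrt3\delta_R))$. Set $$\delta^a_{ij}=\sqrt3\,\delta_t+\max\bigl(|c-g_{\min}|,\ |c-g_{\max}|\bigr).$$ Define $$\hat Q'(\mathbb{B}_R,\mathbb{B}_t)=\sum_{i=1}^n\sum_{j=1}^m \lfloor |(\bar N^x_i)^\top\Phi_c^\top(p_{ij}-\Delta_c)-\|N^x_i\||<d_x+\epsilon+\delta^x_{ij}\rfloor\cdot\lfloor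 |(\bar N^y_i)^\top\Phi_c^\top(p_{ij}-\Delta_c)-\|N^y_i\||<d_y+\epsilon+\delta^y_{ij}\rfloor\cdot\lfloor |(\bar N^z_i)^\top\Phi_c^\top(p_{ij}-\Delta_c)-\|N^z_i\||<\epsilon+\delta^z_{ij}\rfloor.$$ Then $\hat Q'(\mathbb{B}_R,\mathbb{B}_t)\ge\max_{r\in\mathbb{B}_R,\Delta\in\mathbb{B}_t}Q(R(r),\Delta)$, and if $\delta_R=\delta_t=0$ then $\hat Q'(\mathbb{B}_R,\mathbb{B}_t)=Q(\Phi_c,\Delta_c)$.
   Context: For a nonzero vector $N\in\mathbb{R}^3$, $\bar N:=N/\|N\|$; $\angle(a,b)\in[0,\pi]$ is the angle between nonzero vectors. $\lfloor S\rfloor$ denotes the indicator of the statement $S$. For $r\in\mathbb{R}^3$, $R(r)\in\mathrm{SO}(3)$ is the rotation by angle $\|r\|$ about the axis $r/\|r\|$ ($R(0)=I$). For $\Phi\in\mathrm{SO}(3)$, $\Delta\in\mathbb{R}^3$, $$Q(\Phi,\Delta)=\sum_{i=1}^n\sum_{j=1}^m \lfloor |(\bar N^x_i)^\top\Phi^\top(p_{ij}-\Delta)-\|N^x_i\||<d_x+\epsilon\rfloor\cdot\lfloor |(\bar N^y_i)^\top\Phi^\top(p_{ij}-\Delta)-\|N^y_i\||<d_y+\epsilon\rfloor\cdot\lfloor |(\bar N^z_i)^\top\Phi^\top(p_{ij}-\Delta)-\|N^z_i\||<\epsilon\rfloor .$$ *)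

theory Defs
  imports "HOL-Analysis.Analysis" "HOL-Analysis.Cross3"
begin

definition nbar :: "real^3 \<Rightarrow> real^3" where
  "nbar N = (1 / norm N) *\<^sub>R N"

definition vang :: "real^3 \<Rightarrow> real^3 \<Rightarrow> real" where
  "vang a b = arccos ((a \<bullet> b) / (norm a * norm b))"

definition outer :: "real^3 \<Rightarrow> real^3 \<Rightarrow> real^3^3" where
  "outer a b = (\<chi> i j. a $ i * b $ j)"

(* cross-product matrix [k]_x, i.e.  [k]_x *v v = k \<times> v *)
definition crossmat :: "real^3 \<Rightarrow> real^3^3" where
  "crossmat k = (\<chi> i j. (cross3 k (axis j 1)) $ i)"

(* R(r): rotation by angle ||r|| about axis r/||r|| (Rodrigues), R(0) = I *)
definition rot :: "real^3 \<Rightarrow> real^3^3" where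
  "rot r = (if r = 0 then mat 1 else
     (let th = norm r; k = nbar r in
        cos th *\<^sub>R mat 1 + sin th *\<^sub>R crossmat k + (1 - cos th) *\<^sub>R outer k k))"

definition ind :: "bool \<Rightarrow> nat" where
  "ind P = (if P then 1 else 0)"

definition Qfun :: "nat \<Rightarrow> nat \<Rightarrow> (nat \<Rightarrow> nat \<Rightarrow> real^3) \<Rightarrow>
    (nat \<Rightarrow> real^3) \<Rightarrow> (nat \<Rightarrow> real^3) \<Rightarrow> (nat \<Rightarrow> real^3) \<Rightarrow>
    real \<Rightarrow> real \<Rightarrow> real \<Rightarrow> real^3^3 \<Rightarrow> real^3 \<Rightarrow> nat" where
  "Qfun n m p Nx Ny Nz dx dy eps Phi Delta =
    (\<Sum>i\<in>{1..n}. \<Sum>j\<in>{1..m}.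
       ind (\<bar>nbar (Nx i) \<bullet> (transpose Phi *v (p i j - Delta)) - norm (Nx i)\<bar> < dx + eps) *
       ind (\<bar>nbar (Ny i) \<bullet> (transpose Phi *v (p i j - Delta)) - norm (Ny i)\<bar> < dy + eps) *
       ind (\<bar>nbar (Nz i) \<bullet> (transpose Phi *v (p i j - Delta)) - norm (Nz i)\<bar> < eps))"

definition gmax :: "real^3^3 \<Rightarrow> real \<Rightarrow> real^3 \<Rightarrow> real^3 \<Rightarrow> real" where
  "gmax Phic dR N w =
    (if w = 0 then 0 else
     (let beta = vang (Phic *v nbar N) w in
      if beta \<le> sqrt 3 * dR then norm w
      else norm w * max (cos (beta - sqrt 3 * dR)) (cos (beta + sqrt 3 * dR))))"

definition gmin :: "real^3^3 \<Rightarrow> real \<Rightarrow> real^3 \<Rightarrow> real^3 \<Rightarrow> real" where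
  "gmin Phic dR N w =
    (if w = 0 then 0 else
     (let beta = vang (Phic *v nbar N) w in
      if beta \<ge> pi - sqrt 3 * dR then - norm w
      else norm w * min (cos (beta - sqrt 3 * dR)) (cos (beta + sqrt 3 * dR))))"

definition delta_bnd :: "real^3^3 \<Rightarrow> real \<Rightarrow> real \<Rightarrow> real^3 \<Rightarrow> real^3 \<Rightarrow> real" where
  "delta_bnd Phic dR dt N w =
    (let c = (Phic *v nbar N) \<bullet> w in
     sqrt 3 * dt + max \<bar>c - gmin Phic dR N w\<bar> \<bar>c - gmax Phic dR N w\<bar>)"

(* \hat Q'(B_R, B_t) with B_R centred at rc (radius dR, inf-norm), B_t centred at Dc (radius dt) *)
definition Qhat :: "nat \<Rightarrow> nat \<Rightarrow> (nat \<Rightarrow> nat \<Rightarrow> real^3) \<Rightarrow>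
    (nat \<Rightarrow> real^3) \<Rightarrow> (nat \<Rightarrow> real^3) \<Rightarrow> (nat \<Rightarrow> real^3) \<Rightarrow>
    real \<Rightarrow> real \<Rightarrow> real \<Rightarrow> real^3 \<Rightarrow> real \<Rightarrow> real^3 \<Rightarrow> real \<Rightarrow> nat" where
  "Qhat n m p Nx Ny Nz dx dy eps rc dR Dc dt =
    (let Phic = rot rc in
    (\<Sum>i\<in>{1..n}. \<Sum>j\<in>{1..m}.
       ind (\<bar>nbar (Nx i) \<bullet> (transpose Phic *v (p i j - Dc)) - norm (Nx i)\<bar>
            < dx + eps + delta_bnd Phic dR dt (Nx i) (p i j - Dc)) *
       ind (\<bar>nbar (Ny i) \<bullet> (transpose Phic *v (p i j - Dc)) - norm (Ny i)\<bar>
            < dy + eps + delta_bnd Phic dR dt (Ny i) (p i j - Dc)) *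
       ind (\<bar>nbar (Nz i) \<bullet> (transpose Phic *v (p i j - Dc)) - norm (Nz i)\<bar>
            < eps + delta_bnd Phic dR dt (Nz i) (p i j - Dc))))"

definition boxinf :: "real^3 \<Rightarrow> real \<Rightarrow> (real^3) set" where
  "boxinf c d = {r. \<forall>k. \<bar>r $ k - c $ k\<bar> \<le> d}"

end

theory Submission
  imports Defs
begin

lemma inner3: "(x::real^3) \<bullet> y = x$1*y$1 + x$2*y$2 + x$3*y$3"
  by (simp add: inner_vec_def sum_3)

lemma crossmat_mult: "crossmat k *v x = cross3 k x"
  by (simp add: vec_eq_iff matrix_vector_mult_def sum_3 crossmat_def cross3_def axis_def forall_3 vector_3)

lemma outer_mult: "outer k k *v x = (k \<bullet> x) *\<^sub>R k"
  by (simp add: vec_eq_iff matrix_vector_mult_def sum_3 outer_def inner3 forall_3 algebra_simps)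

lemma transpose_inner: "(x::real^3) \<bullet> (transpose (M::real^3^3) *v y) = (M *v x) \<bullet> y"
  by (simp add: inner_vec_def matrix_vector_mult_def transpose_def sum_3 algebra_simps)

definition qrot :: "real \<Rightarrow> real^3 \<Rightarrow> real^3 \<Rightarrow> real^3" where
 "qrot s v x = (s^2 - v \<bullet> v) *\<^sub>R x + (2 * (v \<bullet> x)) *\<^sub>R v + (2 * s) *\<^sub>R (cross3 v x)"

lemma qrot_comp:
  "qrot s v x $ 1 = (s^2 - (v$1 * v$1+v$2 * v$2+v$3 * v$3))*x$1 + 2*(v$1*x$1+v$2*x$2+v$3*x$3) * v$1 + 2 * s*(v$2*x$3 - v$3*x$2)"
  "qrot s v x $ 2 = (s^2 - (v$1 * v$1+v$2 * v$2+v$3 * v$3))*x$2 + 2*(v$1*x$1+v$2*x$2+v$3*x$3) * v$2 + 2 * s*(v$3*x$1 - v$1*x$3)"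
  "qrot s v x $ 3 = (s^2 - (v$1 * v$1+v$2 * v$2+v$3 * v$3))*x$3 + 2*(v$1*x$1+v$2*x$2+v$3*x$3) * v$3 + 2 * s*(v$1*x$2 - v$2*x$1)"
  by (simp_all add: qrot_def inner3 cross3_def)

lemma id1:
  fixes s v1 v2 v3 x1 x2 x3 :: real
  shows "((s^2 - (v1 * v1+v2 * v2+v3 * v3))*x1 + 2*(v1*x1+v2*x2+v3*x3) * v1 + 2 * s*(v2*x3 - v3*x2)) *
         ((s^2 - (v1 * v1+v2 * v2+v3 * v3))*x1 + 2*(v1*x1+v2*x2+v3*x3) * v1 + 2 * s*(v2*x3 - v3*x2))
       + ((s^2 - (v1 * v1+v2 * v2+v3 * v3))*x2 + 2*(v1*x1+v2*x2+v3*x3) * v2 + 2 * s*(v3*x1 - v1*x3)) *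
         ((s^2 - (v1 * v1+v2 * v2+v3 * v3))*x2 + 2*(v1*x1+v2*x2+v3*x3) * v2 + 2 * s*(v3*x1 - v1*x3))
       + ((s^2 - (v1 * v1+v2 * v2+v3 * v3))*x3 + 2*(v1*x1+v2*x2+v3*x3) * v3 + 2 * s*(v1*x2 - v2*x1)) *
         ((s^2 - (v1 * v1+v2 * v2+v3 * v3))*x3 + 2*(v1*x1+v2*x2+v3*x3) * v3 + 2 * s*(v1*x2 - v2*x1))
     = (s^2 + (v1 * v1+v2 * v2+v3 * v3))^2 * (x1*x1+x2*x2+x3*x3)"
  by algebra

lemma id2:
  fixes s v1 v2 v3 t u1 u2 u3 x1 x2 x3 :: real
  shows "((s^2 - (v1 * v1+v2 * v2+v3 * v3))*x1 + 2*(v1*x1+v2*x2+v3*x3) * v1 + 2 * s*(v2*x3 - v3*x2)) *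
         ((t^2 - (u1*u1+u2*u2+u3*u3))*x1 + 2*(u1*x1+u2*x2+u3*x3)*u1 + 2 * t*(u2*x3 - u3*x2))
       + ((s^2 - (v1 * v1+v2 * v2+v3 * v3))*x2 + 2*(v1*x1+v2*x2+v3*x3) * v2 + 2 * s*(v3*x1 - v1*x3)) *
         ((t^2 - (u1*u1+u2*u2+u3*u3))*x2 + 2*(u1*x1+u2*x2+u3*x3)*u2 + 2 * t*(u3*x1 - u1*x3))
       + ((s^2 - (v1 * v1+v2 * v2+v3 * v3))*x3 + 2*(v1*x1+v2*x2+v3*x3) * v3 + 2 * s*(v1*x2 - v2*x1)) *
         ((t^2 - (u1*u1+u2*u2+u3*u3))*x3 + 2*(u1*x1+u2*x2+u3*x3)*u3 + 2 * t*(u1*x2 - u2*x1))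
     = (2*(s * t+(v1*u1+v2*u2+v3*u3))^2 - (s^2 + (v1 * v1+v2 * v2+v3 * v3))*(t^2 + (u1*u1+u2*u2+u3*u3)))
        * (x1*x1+x2*x2+x3*x3) + 2 * ((t * v1 - s*u1 - (u2 * v3 - u3 * v2))*x1+(t * v2 - s*u2 - (u3 * v1 - u1 * v3))*x2+(t * v3 - s*u3 - (u1 * v2 - u2 * v1))*x3)^2"
  by algebra

lemma qrot_norm2: "qrot s v x \<bullet> qrot s v x = (s^2 + v \<bullet> v)^2 * (x \<bullet> x)"
  unfolding inner3[of "qrot s v x"] qrot_comp unfolding inner3 by (rule id1)

lemma qrot_dot: "qrot s v x \<bullet> qrot t u x = (2*(s * t + v \<bullet> u)^2 - (s^2 + v \<bullet> v)*(t^2 + u \<bullet> u)) * (x \<bullet> x)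
   + 2 * ((t *\<^sub>R v - s *\<^sub>R u - cross3 u v) \<bullet> x)^2"
proof -
  have e: "((t *\<^sub>R v - s *\<^sub>R u - cross3 u v) \<bullet> x) = (t * v$1 - s*u$1 - (u$2 * v$3 - u$3 * v$2))*x$1+(t * v$2 - s*u$2 - (u$3 * v$1 - u$1 * v$3))*x$2+(t * v$3 - s*u$3 - (u$1 * v$2 - u$2 * v$1))*x$3"
    by (simp add: inner3 cross3_def)
  show ?thesis
  unfolding e inner3[of "qrot s v x"] qrot_comp unfolding inner3 by (rule id2)
qed


lemma nbar_zero[simp]: "nbar 0 = 0" by (simp add: nbar_def)
lemma norm_nbar: "r \<noteq> 0 \<Longrightarrow> norm (nbar r) = 1" by (simp add: nbar_def)
lemma nbar_inner_self: "r \<noteq> 0 \<Longrightarrow> nbar r \<bullet> nbar r = 1"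
  by (metis norm_nbar norm_eq_1)
lemma r_nbar: "norm r *\<^sub>R nbar r = r" by (simp add: nbar_def)

lemma rot_qrot: "rot r *v x = qrot (cos (norm r / 2)) (sin (norm r / 2) *\<^sub>R nbar r) x"
proof (cases "r = 0")
  case True thus ?thesis by (simp add: rot_def qrot_def)
next
  case False
  define th where "th = norm r"
  define k where "k = nbar r"
  have kk: "k \<bullet> k = 1" using False by (simp add: k_def nbar_inner_self)
  have th2: "th = 2 * (th/2)" by simp
  have c1: "cos th = (cos (th/2))^2 - (sin (th/2))^2" by (subst th2, rule cos_double)
  have c2: "1 - cos th = 2 * (sin (th/2))^2" using c1 sin_cos_squared_add[of "th/2"] by linarith
  have sc: "cos (th/2) * cos (th/2) = 1 - sin (th/2) * sin (th/2)"
    using sin_cos_squared_add[of "th/2"] by (simp add: power2_eq_square)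
  have s1: "sin th = 2 * sin (th/2) * cos (th/2)" by (subst th2, rule sin_double)
  have "rot r *v x = cos th *\<^sub>R x + sin th *\<^sub>R cross3 k x + (1 - cos th) *\<^sub>R ((k \<bullet> x) *\<^sub>R k)"
    using False by (simp add: rot_def th_def k_def Let_def matrix_vector_mult_add_rdistrib
       scaleR_matrix_vector_assoc[symmetric] crossmat_mult outer_mult)
  also have "\<dots> = qrot (cos (th / 2)) (sin (th / 2) *\<^sub>R k) x"
    unfolding qrot_def using kk
    by (simp add: c1 c2 s1 cross_mult_left algebra_simps power2_eq_square sc)
  finally show ?thesis by (simp add: th_def k_def)
qed

lemma quat_unit: "(cos (norm r / 2))^2 + (sin (norm r / 2) *\<^sub>R nbar r) \<bullet> (sin (norm r / 2) *\<^sub>R nbar r) = 1"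
proof (cases "r = 0")
  case True thus ?thesis by simp
next
  case False thus ?thesis using nbar_inner_self[OF False]
    by (simp add: power2_eq_square[symmetric])
qed

lemma rot_norm: "norm (rot r *v x) = norm x"
proof -
  have "(rot r *v x) \<bullet> (rot r *v x) = x \<bullet> x"
    unfolding rot_qrot qrot_norm2 quat_unit by simp
  thus ?thesis by (simp add: norm_eq_sqrt_inner)
qed


lemma norm_nbar_le: "norm (nbar r) \<le> 1"
  by (cases "r = 0") (auto simp: norm_nbar)

lemma one_minus_cos_le: "1 - cos (x::real) \<le> x^2 / 2"
proof -
  have "x = 2 * (x/2)" by simp
  hence "cos x = 1 - 2 * (sin (x/2))^2" by (metis cos_double_sin)
  moreover have "(sin (x/2))^2 \<le> (x/2)^2"
    using abs_sin_x_le_abs_x[of "x/2"] by (metis abs_ge_zero power2_abs power_mono)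
  ultimately show ?thesis by (simp add: power_divide)
qed

lemma sin_sin_le: "0 \<le> (A::real) \<Longrightarrow> 0 \<le> B \<Longrightarrow> sin A * sin B \<le> A * B"
proof -
  assume a: "0 \<le> A" "0 \<le> B"
  have "sin A * sin B \<le> \<bar>sin A\<bar> * \<bar>sin B\<bar>" by (metis abs_ge_self abs_mult)
  also have "\<dots> \<le> A * B"
    using abs_sin_x_le_abs_x[of A] abs_sin_x_le_abs_x[of B] a by (simp add: mult_mono)
  finally show ?thesis .
qed

lemma lin_aux: fixes X Y C Z :: real
  assumes "X \<le> Y" "1 - C \<le> Z / 2" shows "1 - (4 * Z + 8 * Y) / 8 \<le> C - X"
  using assms by (simp add: field_simps)

lemma sigma_bound:
  fixes r r' :: "real^3"
  defines "A \<equiv> norm r / 2" and "B \<equiv> norm r' / 2"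
  shows "cos A * cos B + sin A * sin B * (nbar r \<bullet> nbar r') \<ge> 1 - (norm (r - r'))^2 / 8"
proof -
  define c where "c = nbar r \<bullet> nbar r'"
  have A0: "A \<ge> 0" and B0: "B \<ge> 0" by (simp_all add: A_def B_def)
  have "\<bar>c\<bar> \<le> norm (nbar r) * norm (nbar r')" unfolding c_def by (rule Cauchy_Schwarz_ineq2)
  also have "\<dots> \<le> 1" using norm_nbar_le[of r] norm_nbar_le[of r'] by (simp add: mult_le_one)
  finally have c1: "c \<le> 1" by simp
  have rr: "r = (2*A) *\<^sub>R nbar r" "r' = (2*B) *\<^sub>R nbar r'" by (simp_all add: A_def B_def r_nbar)
  have nA: "nbar r \<bullet> nbar r = (if r = 0 then 0 else 1)" by (simp add: nbar_inner_self)
  have "(norm (r - r'))^2 = r \<bullet> r - 2 * (r \<bullet> r') + r' \<bullet> r'"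
    by (simp add: power2_norm_eq_inner inner_diff_left inner_diff_right inner_commute)
  also have "r \<bullet> r = 4 * A^2" by (simp add: A_def power2_norm_eq_inner[symmetric] power_divide)
  also have "r' \<bullet> r' = 4 * B^2" by (simp add: B_def power2_norm_eq_inner[symmetric] power_divide)
  also have "r \<bullet> r' = 4 * A * B * c" by (subst rr(1), subst rr(2)) (simp add: c_def)
  finally have d: "(norm (r - r'))^2 = 4 * (A - B)^2 + 8 * (A * B * (1 - c))"
    by (simp add: algebra_simps power2_eq_square)
  have e: "cos A * cos B + sin A * sin B * c = cos (A - B) - sin A * sin B * (1 - c)"
    by (simp add: cos_diff algebra_simps)
  have "sin A * sin B * (1 - c) \<le> A * B * (1 - c)"
    using sin_sin_le[OF A0 B0] c1 by (simp add: mult_right_mono)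
  moreover have "1 - cos (A - B) \<le> (A - B)^2 / 2" by (rule one_minus_cos_le)
  ultimately show ?thesis unfolding c_def[symmetric] e d by (rule lin_aux)
qed


lemma rot_dot_ge:
  assumes "norm x = 1"
  shows "(rot r *v x) \<bullet> (rot r' *v x) \<ge>
    2 * (cos (norm r / 2) * cos (norm r' / 2) + sin (norm r / 2) * sin (norm r' / 2) * (nbar r \<bullet> nbar r'))^2 - 1"
proof -
  have xx: "x \<bullet> x = 1" using assms by (simp add: norm_eq_1)
  have vu: "(sin (norm r / 2) *\<^sub>R nbar r) \<bullet> (sin (norm r' / 2) *\<^sub>R nbar r') = sin (norm r / 2) * sin (norm r' / 2) * (nbar r \<bullet> nbar r')"
    by simp
  show ?thesis unfolding rot_qrot qrot_dot quat_unit xx vu by simp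
qed

lemma rot_chord:
  assumes "norm x = 1" "(norm (r - r'))^2 \<le> 8"
  shows "norm (rot r *v x - rot r' *v x) \<le> norm (r - r')"
proof -
  define \<sigma> where "\<sigma> = cos (norm r / 2) * cos (norm r' / 2) + sin (norm r / 2) * sin (norm r' / 2) * (nbar r \<bullet> nbar r')"
  define d where "d = (norm (r - r'))^2"
  have s1: "\<sigma> \<ge> 1 - d / 8" unfolding \<sigma>_def d_def by (rule sigma_bound)
  have s0: "1 - d/8 \<ge> 0" using assms(2) by (simp add: d_def)
  have "(1 - d/8)^2 \<le> \<sigma>^2" using s1 s0 by (simp add: power_mono)
  have dot: "(rot r *v x) \<bullet> (rot r' *v x) \<ge> 2 * \<sigma>^2 - 1" unfolding \<sigma>_def by (rule rot_dot_ge[OF assms(1)])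
  have "(norm (rot r *v x - rot r' *v x))^2 = (rot r *v x) \<bullet> (rot r *v x) - 2 * ((rot r *v x) \<bullet> (rot r' *v x)) + (rot r' *v x) \<bullet> (rot r' *v x)"
    by (simp add: power2_norm_eq_inner inner_diff_left inner_diff_right inner_commute)
  also have "(rot r *v x) \<bullet> (rot r *v x) = 1" using rot_norm[of r x] assms(1) by (simp add: norm_eq_1)
  also have "(rot r' *v x) \<bullet> (rot r' *v x) = 1" using rot_norm[of r' x] assms(1) by (simp add: norm_eq_1)
  finally have "(norm (rot r *v x - rot r' *v x))^2 \<le> 4 - 4 * \<sigma>^2" using dot by linarith
  also have "\<dots> \<le> 4 - 4 * (1 - d/8)^2" using \<open>(1 - d/8)^2 \<le> \<sigma>^2\<close> by linarith
  also have "\<dots> \<le> d" by (simp add: power2_eq_square algebra_simps)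
  finally show ?thesis unfolding d_def by (simp add: power2_le_iff_abs_le)
qed


lemma unit_dot_bounds: "norm a = 1 \<Longrightarrow> norm b = 1 \<Longrightarrow> -1 \<le> a \<bullet> b \<and> a \<bullet> b \<le> (1::real)"
  for a b :: "real^3"
  using Cauchy_Schwarz_ineq2[of a b] by (simp add: abs_le_iff)

lemma vang_unit: "norm a = 1 \<Longrightarrow> norm b = 1 \<Longrightarrow> vang a b = arccos (a \<bullet> b)"
  by (simp add: vang_def)

lemma vang_range: "norm a = 1 \<Longrightarrow> norm b = 1 \<Longrightarrow> 0 \<le> vang a b \<and> vang a b \<le> pi"
  using unit_dot_bounds[of a b] by (simp add: vang_unit arccos_bounded)

lemma cos_vang: "norm a = 1 \<Longrightarrow> norm b = 1 \<Longrightarrow> cos (vang a b) = a \<bullet> b"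
  using unit_dot_bounds[of a b] by (simp add: vang_unit)

lemma vang_triangle:
  fixes a b c :: "real^3"
  assumes a: "norm a = 1" and b: "norm b = 1" and c: "norm c = 1"
  shows "vang a c \<le> vang a b + vang b c"
proof (cases "vang a b + vang b c \<ge> pi")
  case True thus ?thesis using vang_range[OF a c] by linarith
next
  case False
  define x where "x = a \<bullet> b"
  define y where "y = b \<bullet> c"
  have xb: "-1 \<le> x" "x \<le> 1" using unit_dot_bounds[OF a b] by (auto simp: x_def)
  have yb: "-1 \<le> y" "y \<le> 1" using unit_dot_bounds[OF b c] by (auto simp: y_def)
  define ap where "ap = a - x *\<^sub>R b"
  define cp where "cp = c - y *\<^sub>R b"
  have bb: "b \<bullet> b = 1" using b by (simp add: norm_eq_1)
  have aa: "a \<bullet> a = 1" using a by (simp add: norm_eq_1)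
  have cc: "c \<bullet> c = 1" using c by (simp add: norm_eq_1)
  have dec: "a \<bullet> c = x * y + ap \<bullet> cp"
    unfolding ap_def cp_def using bb
    by (simp add: inner_diff_left inner_diff_right x_def y_def inner_commute algebra_simps)
  have nap: "norm ap = sqrt (1 - x^2)"
    unfolding norm_eq_sqrt_inner ap_def using aa bb
    by (simp add: inner_diff_left inner_diff_right x_def inner_commute power2_eq_square algebra_simps)
  have ncp: "norm cp = sqrt (1 - y^2)"
    unfolding norm_eq_sqrt_inner cp_def using cc bb
    by (simp add: inner_diff_left inner_diff_right y_def inner_commute power2_eq_square algebra_simps)
  have "ap \<bullet> cp \<ge> - (norm ap * norm cp)" using Cauchy_Schwarz_ineq2[of ap cp] by linarith
  hence "a \<bullet> c \<ge> x * y - norm ap * norm cp" using dec by linarith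
  hence ac: "a \<bullet> c \<ge> x * y - sqrt (1 - x^2) * sqrt (1 - y^2)" by (simp only: nap ncp)
  have "cos (vang a b + vang b c) = x * y - sqrt (1 - x^2) * sqrt (1 - y^2)"
    using xb yb by (simp add: cos_add vang_unit a b c x_def y_def sin_arccos)
  hence le: "cos (vang a b + vang b c) \<le> a \<bullet> c" using ac by linarith
  have r1: "0 \<le> vang a b + vang b c" using vang_range[OF a b] vang_range[OF b c] by linarith
  have "vang a c = arccos (a \<bullet> c)" by (simp add: vang_unit a c)
  also have "\<dots> \<le> arccos (cos (vang a b + vang b c))"
    using le unit_dot_bounds[OF a c] by (intro arccos_le_arccos) auto
  also have "\<dots> = vang a b + vang b c" using r1 False by (simp add: arccos_cos)
  finally show ?thesis .
qed

lemma sin_ge_cubic: "0 \<le> (y::real) \<Longrightarrow> y - y^3 / 6 \<le> sin y"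
proof -
  assume y: "0 \<le> y"
  have "(\<lambda>t. sin t - t + t^3/6) 0 \<le> (\<lambda>t. sin t - t + t^3/6) y"
  proof (rule DERIV_nonneg_imp_nondecreasing[OF y])
    fix t :: real assume "0 \<le> t" "t \<le> y"
    have "((\<lambda>t. sin t - t + t^3/6) has_real_derivative (cos t - 1 + t^2/2)) (at t)"
      by (auto intro!: derivative_eq_intros simp: power2_eq_square)
    moreover have "cos t - 1 + t^2/2 \<ge> 0" using one_minus_cos_le[of t] by linarith
    ultimately show "\<exists>d. ((\<lambda>t. sin t - t + t^3/6) has_real_derivative d) (at t) \<and> d \<ge> 0" by blast
  qed
  thus ?thesis by simp
qed

lemma vang_chord:
  fixes a b :: "real^3"
  assumes a: "norm a = 1" and b: "norm b = 1"
  shows "vang a b \<le> norm (a - b) + (norm (a - b))^3"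
proof -
  define th where "th = vang a b"
  define y where "y = th / 2"
  have thr: "0 \<le> th" "th \<le> pi" using vang_range[OF a b] by (auto simp: th_def)
  have y0: "0 \<le> y" and ypi: "y \<le> pi/2" using thr by (auto simp: y_def)
  have "pi \<le> 3.2" using pi_approx(2) by simp
  hence "y \<le> 1.6" using ypi by linarith
  hence "y * y \<le> 1.6 * 1.6" using y0 by (intro mult_mono) auto
  hence yy: "y^2 \<le> 3" by (simp add: power2_eq_square)
  have sy0: "0 \<le> sin y" using y0 ypi by (intro sin_ge_zero) (auto intro: order_trans[OF ypi])
  have "(norm (a - b))^2 = 2 - 2 * cos th"
    using a b by (simp add: th_def cos_vang power2_norm_eq_inner inner_diff_left inner_diff_right inner_commute norm_eq_1)
  also have "cos th = 1 - 2 * (sin y)^2"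
  proof -
    have "cos th = cos (2 * y)" by (simp add: y_def)
    thus ?thesis by (simp add: cos_double_sin)
  qed
  finally have "(norm (a - b))^2 = (2 * sin y)^2" by (simp add: power2_eq_square)
  hence ch: "norm (a - b) = 2 * sin y" using sy0 by (subst (asm) power2_eq_iff_nonneg) auto
  have s1: "y - y^3/6 \<le> sin y" using sin_ge_cubic[OF y0] .
  have "y * y^2 \<le> y * 3" using yy y0 by (intro mult_left_mono) auto
  hence "y - y^3/6 \<ge> y / 2" by (simp add: power3_eq_cube power2_eq_square)
  hence s2: "y / 2 \<le> sin y" using s1 by linarith
  have "y^3 \<le> (2 * sin y)^3" using s2 y0 by (intro power_mono) auto
  moreover have "0 \<le> y^3" using y0 by simp
  ultimately have "2 * y \<le> 2 * sin y + (2 * sin y)^3" using s1 by linarith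
  thus ?thesis unfolding ch th_def[symmetric] by (simp add: y_def)
qed


lemma vang_self: "norm a = 1 \<Longrightarrow> vang a a = 0"
proof -
  assume "norm a = 1" hence "a \<bullet> a = 1" by (simp add: norm_eq_1)
  with \<open>norm a = 1\<close> show ?thesis by (simp add: vang_unit)
qed

lemma rot_subdiv:
  fixes r r' n :: "real^3" and N :: nat
  assumes n: "norm n = 1" and N: "N \<ge> 1" and small: "(norm (r' - r) / N)^2 \<le> 8"
  shows "vang (rot r *v n) (rot r' *v n) \<le> N * (norm (r' - r) / N + (norm (r' - r) / N)^3)"
proof -
  define l where "l = norm (r' - r) / N"
  define P where "P k = r + (real k / N) *\<^sub>R (r' - r)" for k :: nat
  define f where "f k = rot (P k) *v n" for k
  have fu: "norm (f k) = 1" for k by (simp add: f_def rot_norm n)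
  have l0: "l \<ge> 0" by (simp add: l_def)
  have step: "norm (P (Suc k) - P k) = l" for k
  proof -
    have "P (Suc k) - P k = (1 / N) *\<^sub>R (r' - r)" by (simp add: P_def algebra_simps add_divide_distrib)
    thus ?thesis using N by (simp add: l_def)
  qed
  have st: "vang (f k) (f (Suc k)) \<le> l + l^3" for k
  proof -
    have c: "norm (f k - f (Suc k)) \<le> l"
    proof -
      have "norm (rot (P k) *v n - rot (P (Suc k)) *v n) \<le> norm (P k - P (Suc k))"
        using small step[of k] by (intro rot_chord n) (simp add: norm_minus_commute l_def)
      thus ?thesis using step[of k] by (simp add: f_def norm_minus_commute)
    qed
    have "(norm (f k - f (Suc k)))^3 \<le> l^3" using c by (intro power_mono) auto
    thus ?thesis using vang_chord[OF fu fu, of k "Suc k"] c by linarith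
  qed
  have ind: "vang (f 0) (f k) \<le> k * (l + l^3)" for k
  proof (induction k)
    case 0 show ?case by (simp add: vang_self fu)
  next
    case (Suc k)
    have "vang (f 0) (f (Suc k)) \<le> vang (f 0) (f k) + vang (f k) (f (Suc k))" by (rule vang_triangle[OF fu fu fu])
    also have "\<dots> \<le> k * (l + l^3) + (l + l^3)" using Suc st[of k] by linarith
    finally show ?case by (simp add: algebra_simps)
  qed
  have "f 0 = rot r *v n" by (simp add: f_def P_def)
  moreover have "f N = rot r' *v n" using N by (simp add: f_def P_def)
  ultimately show ?thesis using ind[of N] by (simp add: l_def)
qed

lemma rot_lip:
  fixes r r' n :: "real^3"
  assumes n: "norm n = 1"
  shows "vang (rot r *v n) (rot r' *v n) \<le> norm (r' - r)"
proof (rule ccontr)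
  define L where "L = norm (r' - r)"
  define V where "V = vang (rot r *v n) (rot r' *v n)"
  assume "\<not> ?thesis"
  hence e: "V - L > 0" by (simp add: V_def L_def)
  have L0: "L \<ge> 0" by (simp add: L_def)
  obtain N :: nat where N: "L^3 / (V - L) + L + 1 < N" using reals_Archimedean2 by blast
  have q0: "L^3 / (V - L) \<ge> 0" using L0 e by simp
  have N1: "N \<ge> 1" using N q0 L0 by linarith
  have NL: "L \<le> N" using N q0 by linarith
  have N0: "real N > 0" using N1 by simp
  have "L / N \<le> 1" using NL N0 by simp
  moreover have "L / N \<ge> 0" using L0 N0 by simp
  ultimately have "(L / N)^2 \<le> 1" by (simp add: power_le_one)
  hence "V \<le> N * (L / N + (L / N)^3)" unfolding V_def L_def by (intro rot_subdiv n N1) simp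
  also have "\<dots> = L + L^3 / (real N)^2" using N0 by (simp add: power3_eq_cube power2_eq_square field_simps)
  also have "L^3 / (real N)^2 \<le> L^3 / real N"
  proof -
    have "real N \<le> (real N)^2" using N1 by (simp add: power2_eq_square)
    thus ?thesis using N0 L0 by (intro divide_left_mono) auto
  qed
  also have "L^3 / real N < V - L"
  proof -
    have "L^3 / (V - L) < N" using N L0 by linarith
    hence "L^3 < N * (V - L)" using e by (simp add: divide_less_eq mult.commute)
    thus ?thesis using N0 by (simp add: divide_less_eq mult.commute)
  qed
  finally show False by simp
qed


lemma vang_sym: "vang a b = vang b a"
  by (simp add: vang_def inner_commute mult.commute)

lemma vang_nbar: "w \<noteq> 0 \<Longrightarrow> vang b w = vang b (nbar w)"
  by (simp add: vang_def nbar_def norm_nbar mult.commute)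

lemma inner_nbar: "w \<noteq> 0 \<Longrightarrow> b \<bullet> w = norm w * (b \<bullet> nbar w)"
  by (simp add: nbar_def)

lemma g_bounds:
  fixes a Phic N w dR
  defines "b \<equiv> Phic *v nbar N"
  assumes a: "norm a = 1" and b: "norm b = 1" and ang: "vang a b \<le> sqrt 3 * dR"
    and dR: "0 \<le> dR" "sqrt 3 * dR \<le> pi"
  shows "gmin Phic dR N w \<le> a \<bullet> w \<and> a \<bullet> w \<le> gmax Phic dR N w"
proof (cases "w = 0")
  case True thus ?thesis by (simp add: gmin_def gmax_def)
next
  case False
  define s where "s = sqrt 3 * dR"
  define e where "e = nbar w"
  have eu: "norm e = 1" using False by (simp add: e_def norm_nbar)
  define \<beta> where "\<beta> = vang b e"
  define \<gamma> where "\<gamma> = vang a e"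
  have s0: "0 \<le> s" using dR by (simp add: s_def)
  have \<beta>def: "vang b w = \<beta>" using False by (simp add: \<beta>_def e_def vang_nbar)
  have aw: "a \<bullet> w = norm w * cos \<gamma>" using False cos_vang[OF a eu] by (simp add: inner_nbar[of w a] \<gamma>_def e_def)
  have t1: "\<beta> \<le> vang a b + \<gamma>" unfolding \<beta>_def \<gamma>_def
    using vang_triangle[OF b a eu] by (simp add: vang_sym)
  have t2: "\<gamma> \<le> vang a b + \<beta>" unfolding \<beta>_def \<gamma>_def
    using vang_triangle[OF a b eu] by simp
  have gr: "0 \<le> \<gamma>" "\<gamma> \<le> pi" using vang_range[OF a eu] by (auto simp: \<gamma>_def)
  have br: "0 \<le> \<beta>" "\<beta> \<le> pi" using vang_range[OF b eu] by (auto simp: \<beta>_def)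
  have nw: "norm w > 0" using False by simp
  have up: "a \<bullet> w \<le> gmax Phic dR N w"
  proof (cases "\<beta> \<le> s")
    case True
    have "a \<bullet> w \<le> norm a * norm w" by (rule Cauchy_Schwarz_ineq2[THEN abs_le_D1])
    thus ?thesis using True False a by (simp add: gmax_def \<beta>def[unfolded b_def] s_def Let_def)
  next
    case nT: False
    have "cos \<gamma> \<le> cos (\<beta> - s)" using t1 ang nT gr by (intro cos_monotone_0_pi_le) (auto simp: s_def)
    hence "a \<bullet> w \<le> norm w * cos (\<beta> - s)" using aw nw by (simp add: mult_left_mono)
    also have "\<dots> \<le> norm w * max (cos (\<beta> - s)) (cos (\<beta> + s))" using nw by (intro mult_left_mono) auto
    finally show ?thesis using nT False by (simp add: gmax_def \<beta>def[unfolded b_def] s_def Let_def)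
  qed
  have lo: "gmin Phic dR N w \<le> a \<bullet> w"
  proof (cases "\<beta> \<ge> pi - s")
    case True
    have "- (norm a * norm w) \<le> a \<bullet> w" using Cauchy_Schwarz_ineq2[of a w] by linarith
    thus ?thesis using True False a by (simp add: gmin_def \<beta>def[unfolded b_def] s_def Let_def)
  next
    case nT: False
    have "cos (\<beta> + s) \<le> cos \<gamma>" using t2 ang nT gr by (intro cos_monotone_0_pi_le) (auto simp: s_def)
    hence "norm w * cos (\<beta> + s) \<le> a \<bullet> w" using aw nw by (simp add: mult_left_mono)
    moreover have "norm w * min (cos (\<beta> - s)) (cos (\<beta> + s)) \<le> norm w * cos (\<beta> + s)" using nw by (intro mult_left_mono) auto
    ultimately have "norm w * min (cos (\<beta> - s)) (cos (\<beta> + s)) \<le> a \<bullet> w" by linarith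
    thus ?thesis using nT False by (simp add: gmin_def \<beta>def[unfolded b_def] s_def Let_def)
  qed
  show ?thesis using up lo by simp
qed


lemma box_norm:
  fixes x c :: "real^3"
  assumes "x \<in> boxinf c d"
  shows "norm (x - c) \<le> sqrt 3 * d"
proof -
  define z where "z = x - c"
  have zk: "\<bar>z $ k\<bar> \<le> d" for k using assms by (simp add: boxinf_def z_def)
  have d0: "0 \<le> d" using zk[of 1] by linarith
  have sq: "(z $ k)^2 \<le> d^2" for k
  proof -
    have "\<bar>z $ k\<bar>^2 \<le> d^2" using zk[of k] by (intro power_mono) auto
    thus ?thesis by simp
  qed
  have "z \<bullet> z \<le> 3 * d^2"
    using sq[of 1] sq[of 2] sq[of 3] by (simp add: inner3 power2_eq_square)
  hence "sqrt (z \<bullet> z) \<le> sqrt (3 * d^2)" by (rule real_sqrt_le_mono)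
  also have "\<dots> = sqrt 3 * d" using d0 by (simp add: real_sqrt_mult)
  finally show ?thesis by (simp add: z_def norm_eq_sqrt_inner)
qed

lemma term_bound:
  fixes N p Delta r rc Dc :: "real^3"
  assumes N: "N \<noteq> 0" and r: "r \<in> boxinf rc dR" and D: "Delta \<in> boxinf Dc dt"
    and dR: "0 \<le> dR" "sqrt 3 * dR \<le> pi" and dt: "0 \<le> dt"
  shows "\<bar>nbar N \<bullet> (transpose (rot r) *v (p - Delta)) - nbar N \<bullet> (transpose (rot rc) *v (p - Dc))\<bar>
         \<le> delta_bnd (rot rc) dR dt N (p - Dc)"
proof -
  define u where "u = nbar N"
  have uu: "norm u = 1" using N by (simp add: u_def norm_nbar)
  define a where "a = rot r *v u"
  define b where "b = rot rc *v u"
  have au: "norm a = 1" and bu: "norm b = 1" by (simp_all add: a_def b_def rot_norm uu)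
  define w where "w = p - Dc"
  define c where "c = b \<bullet> w"
  have ang: "vang a b \<le> sqrt 3 * dR"
  proof -
    have "vang a b \<le> norm (rc - r)" unfolding a_def b_def by (rule rot_lip[OF uu])
    also have "\<dots> = norm (r - rc)" by (rule norm_minus_commute)
    also have "\<dots> \<le> sqrt 3 * dR" by (rule box_norm[OF r])
    finally show ?thesis .
  qed
  have g: "gmin (rot rc) dR N w \<le> a \<bullet> w \<and> a \<bullet> w \<le> gmax (rot rc) dR N w"
    using g_bounds[of a "rot rc" N dR w] au bu ang dR by (simp add: b_def u_def)
  have m: "\<bar>a \<bullet> w - c\<bar> \<le> max \<bar>c - gmin (rot rc) dR N w\<bar> \<bar>c - gmax (rot rc) dR N w\<bar>"
    using g by (auto simp: abs_le_iff max_def)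
  have t: "\<bar>a \<bullet> (Delta - Dc)\<bar> \<le> sqrt 3 * dt"
  proof -
    have "\<bar>a \<bullet> (Delta - Dc)\<bar> \<le> norm a * norm (Delta - Dc)" by (rule Cauchy_Schwarz_ineq2)
    also have "\<dots> \<le> sqrt 3 * dt" using au box_norm[OF D] by simp
    finally show ?thesis .
  qed
  have e1: "nbar N \<bullet> (transpose (rot r) *v (p - Delta)) = a \<bullet> w - a \<bullet> (Delta - Dc)"
    unfolding transpose_inner by (simp add: a_def u_def w_def inner_diff_right)
  have e2: "nbar N \<bullet> (transpose (rot rc) *v (p - Dc)) = c"
    unfolding transpose_inner by (simp add: b_def u_def w_def c_def)
  have e3: "delta_bnd (rot rc) dR dt N (p - Dc) = sqrt 3 * dt + max \<bar>c - gmin (rot rc) dR N w\<bar> \<bar>c - gmax (rot rc) dR N w\<bar>"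
    by (simp add: delta_bnd_def Let_def c_def b_def u_def w_def)
  show ?thesis unfolding e1 e2 e3 using m t by linarith
qed

lemma ind_mono:
  assumes "\<bar>X - Y\<bar> \<le> (\<delta>::real)"
  shows "ind (\<bar>X - m\<bar> < d) \<le> ind (\<bar>Y - m\<bar> < d + \<delta>)"
  using assms by (auto simp: ind_def)

lemma delta0:
  fixes N w rc :: "real^3"
  assumes N: "N \<noteq> 0"
  shows "delta_bnd (rot rc) 0 0 N w = 0"
proof -
  define b where "b = rot rc *v nbar N"
  have bu: "norm b = 1" using N by (simp add: b_def rot_norm norm_nbar)
  show ?thesis
  proof (cases "w = 0")
    case True thus ?thesis by (simp add: delta_bnd_def gmin_def gmax_def)
  next
    case False
    define \<beta> where "\<beta> = vang b w"
    have eu: "norm (nbar w) = 1" using False by (simp add: norm_nbar)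
    have c: "b \<bullet> w = norm w * cos \<beta>"
      using False cos_vang[OF bu eu] by (simp add: inner_nbar[of w b] \<beta>_def vang_nbar)
    have br: "0 \<le> \<beta>" "\<beta> \<le> pi" using vang_range[OF bu eu] False by (auto simp: \<beta>_def vang_nbar)
    have gx: "gmax (rot rc) 0 N w = b \<bullet> w"
      using br c False by (auto simp: gmax_def Let_def b_def[symmetric] \<beta>_def[symmetric])
    have gn: "gmin (rot rc) 0 N w = b \<bullet> w"
      using br c False by (auto simp: gmin_def Let_def b_def[symmetric] \<beta>_def[symmetric])
    show ?thesis by (simp add: delta_bnd_def Let_def b_def[symmetric] gx gn)
  qed
qed


theorem mainTheorem3:
  fixes n m :: nat and p :: "nat \<Rightarrow> nat \<Rightarrow> real^3"
    and Nx Ny Nz :: "nat \<Rightarrow> real^3"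
    and dx dy eps dR dt :: real and rc Dc :: "real^3"
  assumes "n \<ge> 1" "m \<ge> 1"
    and "\<forall>i\<in>{1..n}. Nx i \<noteq> 0 \<and> Ny i \<noteq> 0 \<and> Nz i \<noteq> 0"
    and "dx > 0" "dy > 0" "eps > 0"
    and "dR \<ge> 0" "sqrt 3 * dR \<le> pi" "dt \<ge> 0"
  shows "(\<forall>r\<in>boxinf rc dR. \<forall>Delta\<in>boxinf Dc dt.
            Qfun n m p Nx Ny Nz dx dy eps (rot r) Delta \<le> Qhat n m p Nx Ny Nz dx dy eps rc dR Dc dt)
       \<and> (dR = 0 \<and> dt = 0 \<longrightarrow>
            Qhat n m p Nx Ny Nz dx dy eps rc dR Dc dt = Qfun n m p Nx Ny Nz dx dy eps (rot rc) Dc)"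
proof (intro conjI ballI impI)
  fix r Delta assume r: "r \<in> boxinf rc dR" and D: "Delta \<in> boxinf Dc dt"
  note tb = term_bound[OF _ r D assms(7) assms(8) assms(9)]
  show "Qfun n m p Nx Ny Nz dx dy eps (rot r) Delta \<le> Qhat n m p Nx Ny Nz dx dy eps rc dR Dc dt"
    unfolding Qfun_def Qhat_def Let_def
  proof (intro sum_mono mult_le_mono)
    fix i j assume i: "i \<in> {1..n}"
    hence nz: "Nx i \<noteq> 0" "Ny i \<noteq> 0" "Nz i \<noteq> 0" using assms(3) by auto
    show "ind (\<bar>nbar (Nx i) \<bullet> (transpose (rot r) *v (p i j - Delta)) - norm (Nx i)\<bar> < dx + eps)
        \<le> ind (\<bar>nbar (Nx i) \<bullet> (transpose (rot rc) *v (p i j - Dc)) - norm (Nx i)\<bar>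
            < dx + eps + delta_bnd (rot rc) dR dt (Nx i) (p i j - Dc))"
      by (rule ind_mono[OF tb[OF nz(1)]])
    show "ind (\<bar>nbar (Ny i) \<bullet> (transpose (rot r) *v (p i j - Delta)) - norm (Ny i)\<bar> < dy + eps)
        \<le> ind (\<bar>nbar (Ny i) \<bullet> (transpose (rot rc) *v (p i j - Dc)) - norm (Ny i)\<bar>
            < dy + eps + delta_bnd (rot rc) dR dt (Ny i) (p i j - Dc))"
      by (rule ind_mono[OF tb[OF nz(2)]])
    show "ind (\<bar>nbar (Nz i) \<bullet> (transpose (rot r) *v (p i j - Delta)) - norm (Nz i)\<bar> < eps)
        \<le> ind (\<bar>nbar (Nz i) \<bullet> (transpose (rot rc) *v (p i j - Dc)) - norm (Nz i)\<bar>
            < eps + delta_bnd (rot rc) dR dt (Nz i) (p i j - Dc))"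
      by (rule ind_mono[OF tb[OF nz(3)]])
  qed
next
  assume z: "dR = 0 \<and> dt = 0"
  show "Qhat n m p Nx Ny Nz dx dy eps rc dR Dc dt = Qfun n m p Nx Ny Nz dx dy eps (rot rc) Dc"
    unfolding Qfun_def Qhat_def Let_def
  proof (intro sum.cong refl)
    fix i j assume i: "i \<in> {1..n}"
    hence nz: "Nx i \<noteq> 0" "Ny i \<noteq> 0" "Nz i \<noteq> 0" using assms(3) by auto
    show "ind (\<bar>nbar (Nx i) \<bullet> (transpose (rot rc) *v (p i j - Dc)) - norm (Nx i)\<bar>
            < dx + eps + delta_bnd (rot rc) dR dt (Nx i) (p i j - Dc)) *
          ind (\<bar>nbar (Ny i) \<bullet> (transpose (rot rc) *v (p i j - Dc)) - norm (Ny i)\<bar>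
            < dy + eps + delta_bnd (rot rc) dR dt (Ny i) (p i j - Dc)) *
          ind (\<bar>nbar (Nz i) \<bullet> (transpose (rot rc) *v (p i j - Dc)) - norm (Nz i)\<bar>
            < eps + delta_bnd (rot rc) dR dt (Nz i) (p i j - Dc)) =
          ind (\<bar>nbar (Nx i) \<bullet> (transpose (rot rc) *v (p i j - Dc)) - norm (Nx i)\<bar> < dx + eps) *
          ind (\<bar>nbar (Ny i) \<bullet> (transpose (rot rc) *v (p i j - Dc)) - norm (Ny i)\<bar> < dy + eps) *
          ind (\<bar>nbar (Nz i) \<bullet> (transpose (rot rc) *v (p i j - Dc)) - norm (Nz i)\<bar> < eps)"
      using z by (simp add: delta0 nz)
  qed
qed

end
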